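(* Let $G$ be a graph in which every edge has even multiplicity, i.e. for every pair of distinct vertices $u,v$ the number of edges joining $u$ and $v$ is even. Let $\mathcal D$ be a decomposition of $G$ into cycles, and let $C\in\mathcal D$. Then $$|\mathcal D|\le \frac{|E(G)|}{2}-|E(C)|+2.$$
   Context: Graphs may have multiple edges but no loops. For $m\ge2$, an $m$-cycle is a cycle with $m$ edges; a $2$-cycle consists of two parallel edges. A cycle decomposition of $G$ is a set of cycles in $G$ whose edge sets partition $E(G)$. *)

theory Defs
  imports Complex_Main
begin

text \<open>A finite multigraph without loops: vertex set V, edge set E (edges are
  abstract objects, so parallel edges are allowed), and an endpoint map
  assigning to each edge a set of exactly two distinct vertices.\<close>
definition multigraph :: "'v set \<Rightarrow> 'e set \<Rightarrow> ('e \<Rightarrow> 'v set) \<Rightarrow> bool" where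
  "multigraph V E ends \<longleftrightarrow> finite V \<and> finite E \<and>
     (\<forall>e\<in>E. ends e \<subseteq> V \<and> card (ends e) = 2)"

definition mult :: "'e set \<Rightarrow> ('e \<Rightarrow> 'v set) \<Rightarrow> 'v \<Rightarrow> 'v \<Rightarrow> nat" where
  "mult E ends u v = card {e\<in>E. ends e = {u, v}}"

text \<open>For m = 2 this is a pair of parallel edges.\<close>
definition is_cycle_in :: "'e set \<Rightarrow> ('e \<Rightarrow> 'v set) \<Rightarrow> 'e set \<Rightarrow> bool" where
  "is_cycle_in E ends C \<longleftrightarrow> C \<subseteq> E \<and>
     (\<exists>(m::nat) (vs::nat \<Rightarrow> 'v) (es::nat \<Rightarrow> 'e). m \<ge> 2 \<and>
        inj_on vs {..<m} \<and> inj_on es {..<m} \<and> C = es ` {..<m} \<and>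
        (\<forall>i<m. ends (es i) = {vs i, vs ((i + 1) mod m)}))"

definition cycle_decomposition :: "'e set \<Rightarrow> ('e \<Rightarrow> 'v set) \<Rightarrow> 'e set set \<Rightarrow> bool" where
  "cycle_decomposition E ends D \<longleftrightarrow>
     (\<forall>C\<in>D. is_cycle_in E ends C) \<and>
     (\<forall>C1\<in>D. \<forall>C2\<in>D. C1 \<noteq> C2 \<longrightarrow> C1 \<inter> C2 = {}) \<and>
     \<Union>D = E"

end

theory Submission
  imports "HOL-Library.Multiset" Defs
begin

definition deg :: "'v \<Rightarrow> 'v set multiset \<Rightarrow> nat" where
  "deg x Z = size (filter_mset (\<lambda>p. x \<in> p) Z)"
definition good :: "'v set multiset \<Rightarrow> bool" where
  "good Z \<longleftrightarrow> (\<forall>p\<in>#Z. card p = 2) \<and> (\<forall>x. even (deg x Z))"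
definition cost :: "'v set multiset \<Rightarrow> int" where
  "cost Z = (if Z = {#} then 0 else int (size Z) - 2)"
definition cycm :: "(nat \<Rightarrow> 'v) \<Rightarrow> nat \<Rightarrow> 'v set multiset" where
  "cycm vs m = mset (map (\<lambda>i. {vs i, vs (Suc i mod m)}) [0..<m])"
definition ctr :: "('v \<Rightarrow> 'v) \<Rightarrow> 'v set multiset \<Rightarrow> 'v set multiset" where
  "ctr f Z = filter_mset (\<lambda>p. card p = 2) (image_mset ((`) f) Z)"

lemma good_size: assumes "good Z" "Z \<noteq> {#}" shows "size Z \<ge> 2"
proof -
  obtain p where p: "p \<in># Z" using assms(2) by blast
  then have "card p = 2" using assms(1) unfolding good_def by blast
  then obtain x y where xy: "p = {x,y}" "x \<noteq> y" by (meson card_2_iff)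
  have "p \<in># filter_mset (\<lambda>p. x \<in> p) Z" using p xy by simp
  then have "deg x Z \<noteq> 0" unfolding deg_def by (metis empty_iff set_mset_empty size_eq_0_iff_empty)
  moreover have "even (deg x Z)" using assms(1) unfolding good_def by blast
  ultimately have "deg x Z \<ge> 2" by presburger
  moreover have "deg x Z \<le> size Z" unfolding deg_def by (rule size_filter_mset_lesseq)
  ultimately show ?thesis by linarith
qed

lemma cost_nonneg: "good Z \<Longrightarrow> 0 \<le> cost Z"
  using good_size[of Z] unfolding cost_def by force

lemma f_in: fixes v a :: 'v assumes "v \<noteq> a"
  shows "(x \<in> (\<lambda>y. if y = v then a else y) ` p) \<longleftrightarrow> (x \<noteq> v \<and> (x \<in> p \<or> (x = a \<and> v \<in> p)))"
  using assms by auto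

lemma card_f: fixes v a :: 'v assumes "v \<noteq> a" "card p = 2"
  shows "card ((\<lambda>y. if y = v then a else y) ` p) = 2 \<longleftrightarrow> p \<noteq> {v,a}"
proof -
  obtain x y where xy: "p = {x,y}" "x \<noteq> y" using assms(2) by (meson card_2_iff)
  let ?f = "\<lambda>y. if y = v then a else y"
  have im: "?f ` p = {?f x, ?f y}" using xy by simp
  have "card {?f x, ?f y} = 2 \<longleftrightarrow> ?f x \<noteq> ?f y" by (simp add: card_insert_if)
  moreover have "?f x = ?f y \<longleftrightarrow> p = {v,a}"
    using xy assms(1) by (cases "x = v"; cases "y = v"; auto simp: doubleton_eq_iff)
  ultimately show ?thesis using im by simp
qed

lemma size_ctr:
  fixes v a :: 'v assumes "v \<noteq> a" "\<forall>p\<in>#Z. card p = 2"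
  shows "size (ctr (\<lambda>y. if y = v then a else y) Z) + count Z {v,a} = size Z"
  using assms(2)
proof (induction Z)
  case empty then show ?case by (simp add: ctr_def)
next
  case (add p Z)
  have "card p = 2" using add.prems by simp
  then show ?case using add card_f[OF assms(1), of p] by (auto simp: ctr_def)
qed

lemma ctr_add[simp]: "ctr f (add_mset p Z) = (if card (f ` p) = 2 then add_mset (f ` p) (ctr f Z) else ctr f Z)"
  by (simp add: ctr_def)
lemma ctr_empty[simp]: "ctr f {#} = {#}" by (simp add: ctr_def)
lemma deg_add[simp]: "deg x (add_mset p Z) = deg x Z + (if x \<in> p then 1 else 0)"
  by (simp add: deg_def)
lemma deg_empty[simp]: "deg x {#} = 0" by (simp add: deg_def)

lemma pt_a:
  fixes v a :: 'v assumes "v \<noteq> a" "card p = 2"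
  shows "(if card ((\<lambda>y. if y = v then a else y) ` p) = 2 then (if a \<in> (\<lambda>y. if y = v then a else y) ` p then 1 else 0) else 0)
     + 2 * (if p = {v,a} then 1 else 0) = (if a \<in> p then 1 else 0) + (if v \<in> p then (1::nat) else 0)"
proof -
  obtain x y where xy: "p = {x,y}" "x \<noteq> y" using assms(2) by (meson card_2_iff)
  have e: "card ((\<lambda>y. if y = v then a else y) ` p) = 2 \<longleftrightarrow> p \<noteq> {v,a}" using card_f[OF assms] .
  show ?thesis
  proof (cases "p = {v,a}")
    case True then show ?thesis using e assms(1) by simp
  next
    case False
    have "\<not> (a \<in> p \<and> v \<in> p)" using False xy assms(1) by auto
    then show ?thesis using False e f_in[OF assms(1), of a p] by auto
  qed
qed

lemma deg_a_ctr:
  fixes v a :: 'v assumes "v \<noteq> a" "\<forall>p\<in>#Z. card p = 2"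
  shows "deg a (ctr (\<lambda>y. if y = v then a else y) Z) + 2 * count Z {v,a} = deg a Z + deg v Z"
  using assms(2)
proof (induction Z)
  case empty then show ?case by simp
next
  case (add p Z)
  have c: "card p = 2" using add.prems by simp
  have IH: "deg a (ctr (\<lambda>y. if y = v then a else y) Z) + 2 * count Z {v,a} = deg a Z + deg v Z"
    using add by simp
  have P: "(if card ((\<lambda>y. if y = v then a else y) ` p) = 2 then (if a \<in> (\<lambda>y. if y = v then a else y) ` p then 1 else 0) else 0)
     + 2 * (if p = {v,a} then 1 else 0) = (if a \<in> p then 1 else 0) + (if v \<in> p then (1::nat) else 0)"
    using pt_a[OF assms(1) c] .
  have "deg a (ctr (\<lambda>y. if y = v then a else y) (add_mset p Z)) = deg a (ctr (\<lambda>y. if y = v then a else y) Z) +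
     (if card ((\<lambda>y. if y = v then a else y) ` p) = 2 then (if a \<in> (\<lambda>y. if y = v then a else y) ` p then 1 else 0) else 0)"
    by simp
  moreover have "count (add_mset p Z) {v,a} = count Z {v,a} + (if p = {v,a} then 1 else 0)" by simp
  ultimately show ?case using IH P by simp
qed

lemma deg_other_ctr:
  fixes v a :: 'v assumes "v \<noteq> a" "\<forall>p\<in>#Z. card p = 2" "x \<noteq> a"
  shows "deg x (ctr (\<lambda>y. if y = v then a else y) Z) = (if x = v then 0 else deg x Z)"
  using assms(2)
proof (induction Z)
  case empty then show ?case by simp
next
  case (add p Z)
  have c: "card p = 2" using add.prems by simp
  have P: "(if card ((\<lambda>y. if y = v then a else y) ` p) = 2 then (if x \<in> (\<lambda>y. if y = v then a else y) ` p then 1 else 0) else 0)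
     = (if x = v then 0 else if x \<in> p then 1 else (0::nat))"
  proof -
    have e: "card ((\<lambda>y. if y = v then a else y) ` p) = 2 \<longleftrightarrow> p \<noteq> {v,a}" using card_f[OF assms(1) c] .
    have i: "(x \<in> (\<lambda>y. if y = v then a else y) ` p) \<longleftrightarrow> (x \<noteq> v \<and> x \<in> p)"
      using f_in[OF assms(1), of x p] assms(3) by blast
    show ?thesis
    proof (cases "p = {v,a}")
      case True then show ?thesis using e assms(3) by auto
    next
      case False then show ?thesis using e i by simp
    qed
  qed
  have IH: "deg x (ctr (\<lambda>y. if y = v then a else y) Z) = (if x = v then 0 else deg x Z)" using add by simp
  have "deg x (ctr (\<lambda>y. if y = v then a else y) (add_mset p Z)) = deg x (ctr (\<lambda>y. if y = v then a else y) Z) +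
     (if card ((\<lambda>y. if y = v then a else y) ` p) = 2 then (if x \<in> (\<lambda>y. if y = v then a else y) ` p then 1 else 0) else 0)"
    by simp
  then show ?case using IH P by (simp del: ctr_add)
qed

lemma good_ctr:
  fixes v a :: 'v assumes "v \<noteq> a" "good Z"
  shows "good (ctr (\<lambda>y. if y = v then a else y) Z)"
proof -
  have c: "\<forall>p\<in>#Z. card p = 2" using assms(2) unfolding good_def by blast
  have "even (deg x (ctr (\<lambda>y. if y = v then a else y) Z))" for x
  proof (cases "x = a")
    case True
    have "even (deg a Z + deg v Z)" using assms(2) unfolding good_def by simp
    then show ?thesis using deg_a_ctr[OF assms(1) c] True by presburger
  next
    case False
    then show ?thesis using deg_other_ctr[OF assms(1) c False] assms(2) unfolding good_def by simp
  qed
  then show ?thesis unfolding good_def ctr_def by auto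
qed

lemma count_ctr:
  assumes "finite U" "set_mset M \<subseteq> U"
  shows "count (ctr f M) q = (if card q = 2 then (\<Sum>p\<in>{p\<in>U. f ` p = q}. count M p) else 0)"
  using assms(2)
proof (induction M)
  case empty then show ?case by simp
next
  case (add p M)
  have pU: "p \<in> U" using add.prems by simp
  have IH: "count (ctr f M) q = (if card q = 2 then (\<Sum>p\<in>{p\<in>U. f ` p = q}. count M p) else 0)"
    using add by simp
  have fin: "finite {p\<in>U. f ` p = q}" using assms(1) by simp
  have "(\<Sum>x\<in>{p\<in>U. f ` p = q}. count (add_mset p M) x) =
        (\<Sum>x\<in>{p\<in>U. f ` p = q}. count M x + (if x = p then 1 else 0))"
    by (rule sum.cong) auto
  also have "\<dots> = (\<Sum>x\<in>{p\<in>U. f ` p = q}. count M x) + (\<Sum>x\<in>{p\<in>U. f ` p = q}. (if x = p then 1 else 0))"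
    by (rule sum.distrib)
  also have "(\<Sum>x\<in>{p\<in>U. f ` p = q}. (if x = p then 1 else 0)) = (if f ` p = q then 1 else (0::nat))"
    using fin pU by (simp add: sum.delta')
  finally have S: "(\<Sum>x\<in>{p\<in>U. f ` p = q}. count (add_mset p M) x) =
     (\<Sum>x\<in>{p\<in>U. f ` p = q}. count M x) + (if f ` p = q then 1 else 0)" .
  show ?case using IH S by auto
qed

lemma sum_count_ctr:
  assumes "finite U" "\<forall>Z\<in>#W. set_mset Z \<subseteq> U"
  shows "(\<Sum>Z\<in>#W. count (ctr f Z) q) = (if card q = 2 then (\<Sum>p\<in>{p\<in>U. f ` p = q}. (\<Sum>Z\<in>#W. count Z p)) else 0)"
  using assms(2)
proof (induction W)
  case empty then show ?case by simp
next
  case (add Z W)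
  have "count (ctr f Z) q = (if card q = 2 then (\<Sum>p\<in>{p\<in>U. f ` p = q}. count Z p) else 0)"
    using count_ctr[OF assms(1)] add.prems by simp
  then show ?case using add by (simp add: sum.distrib)
qed

lemma ctr_mset: "ctr f (mset xs) = mset (filter (\<lambda>p. card p = 2) (map ((`) f) xs))"
  unfolding ctr_def by (simp only: mset_filter mset_map)

lemma count_mset_len: "count (mset xs) x = length (filter (\<lambda>y. x = y) xs)"
  by (induction xs) auto

lemma size_filter_mset_map: "size (filter_mset P (mset (map g xs))) = length (filter (P \<circ> g) xs)"
  by (simp only: mset_filter[symmetric] size_mset filter_map length_map)

lemma cyc_neq:
  assumes "m \<ge> 2" "inj_on vs {..<m}" "i < m"
  shows "vs i \<noteq> vs (Suc i mod m)"
proof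
  assume "vs i = vs (Suc i mod m)"
  then have "i = Suc i mod m" using assms by (intro inj_onD[OF assms(2)]) auto
  moreover have "i \<noteq> Suc i mod m"
  proof (cases "Suc i < m")
    case True then show ?thesis by simp
  next
    case False then have "Suc i = m" using assms(3) by simp
    then show ?thesis using assms(1) by auto
  qed
  ultimately show False by simp
qed


lemma deg_cycm:
  assumes "m \<ge> 2" "inj_on vs {..<m}"
  shows "deg x (cycm vs m) = 2 * card {i. i < m \<and> x = vs i}"
proof -
  define g where "g = (\<lambda>i::nat. Suc i mod m)"
  define A1 where "A1 = {i. i < m \<and> x = vs i}"
  define A2 where "A2 = {i. i < m \<and> x = vs (g i)}"
  have "deg x (cycm vs m) = length (filter (\<lambda>i. x \<in> {vs i, vs (Suc i mod m)}) [0..<m])"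
    unfolding deg_def cycm_def size_filter_mset_map comp_def by (rule refl)
  also have "\<dots> = card {i. i < m \<and> x \<in> {vs i, vs (Suc i mod m)}}"
    by (simp add: length_filter_conv_card, intro arg_cong[where f=card] Collect_cong) auto
  also have "{i. i < m \<and> x \<in> {vs i, vs (Suc i mod m)}} = A1 \<union> A2"
    unfolding A1_def A2_def g_def by auto
  also have "card (A1 \<union> A2) = card A1 + card A2"
  proof (rule card_Un_disjoint)
    show "finite A1" unfolding A1_def by simp
    show "finite A2" unfolding A2_def by simp
    show "A1 \<inter> A2 = {}" using cyc_neq[OF assms] unfolding A1_def A2_def g_def by auto
  qed
  also have "card A2 = card A1"
  proof -
    have inj: "inj_on g {..<m}"
    proof (rule inj_onI)
      fix i j assume ij: "i \<in> {..<m}" "j \<in> {..<m}" "g i = g j"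
      then have "Suc i mod m = Suc j mod m" unfolding g_def by simp
      then have "(Suc i + (m - 1)) mod m = (Suc j + (m - 1)) mod m" by (metis mod_add_left_eq)
      moreover have "Suc i + (m - 1) = i + m" "Suc j + (m - 1) = j + m" using assms(1) by auto
      ultimately have "i mod m = j mod m" by simp
      then show "i = j" using ij by simp
    qed
    have gim: "g ` {..<m} = {..<m}"
    proof (rule endo_inj_surj)
      show "finite {..<m}" by simp
      show "g ` {..<m} \<subseteq> {..<m}" unfolding g_def using assms(1) by auto
      show "inj_on g {..<m}" by (rule inj)
    qed
    have "g ` A2 = A1"
    proof
      show "g ` A2 \<subseteq> A1" unfolding A1_def A2_def g_def using assms(1) by auto
      show "A1 \<subseteq> g ` A2"
      proof
        fix j assume "j \<in> A1"
        then have j: "j < m" "x = vs j" unfolding A1_def by auto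
        then obtain i where "i < m" "g i = j" using gim by (metis imageE lessThan_iff)
        then show "j \<in> g ` A2" unfolding A2_def using j by auto
      qed
    qed
    moreover have "inj_on g A2" using inj by (rule inj_on_subset) (auto simp: A2_def)
    ultimately show ?thesis by (metis card_image)
  qed
  finally show ?thesis unfolding A1_def by simp
qed

lemma good_cycm:
  assumes "m \<ge> 2" "inj_on vs {..<m}"
  shows "good (cycm vs m)"
proof -
  have "\<forall>p\<in>#cycm vs m. card p = 2"
  proof
    fix p assume "p \<in># cycm vs m"
    then obtain i where "i < m" "p = {vs i, vs (Suc i mod m)}" unfolding cycm_def by auto
    then show "card p = 2" using cyc_neq[OF assms] by simp
  qed
  then show ?thesis unfolding good_def using deg_cycm[OF assms] by simp
qed

lemma size_cycm: "size (cycm vs m) = m" unfolding cycm_def by simp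

lemma count_cycm_va:
  assumes "n \<ge> 2" "inj_on vs {..<Suc n}"
  shows "count (cycm vs (Suc n)) {vs n, vs 0} = 1"
proof -
  have "count (cycm vs (Suc n)) {vs n, vs 0} = length (filter (\<lambda>i. {vs n, vs 0} = {vs i, vs (Suc i mod Suc n)}) [0..<Suc n])"
    unfolding cycm_def count_mset_len filter_map length_map comp_def by (rule refl)
  also have "filter (\<lambda>i. {vs n, vs 0} = {vs i, vs (Suc i mod Suc n)}) [0..<Suc n] = filter (\<lambda>i. i = n) [0..<Suc n]"
  proof (rule filter_cong[OF refl])
    fix i assume "i \<in> set [0..<Suc n]"
    then have i: "i < Suc n" by (simp only: set_upt atLeastLessThan_iff)
    show "({vs n, vs 0} = {vs i, vs (Suc i mod Suc n)}) = (i = n)"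
    proof (cases "i = n")
      case True then show ?thesis by simp
    next
      case False
      then have "Suc i mod Suc n = Suc i" "Suc i < Suc n" using i by auto
      moreover have "vs i = vs n \<longleftrightarrow> i = n" "vs i = vs 0 \<longleftrightarrow> i = 0"
        "vs (Suc i) = vs 0 \<longleftrightarrow> Suc i = 0" "vs (Suc i) = vs n \<longleftrightarrow> Suc i = n"
        using inj_onD[OF assms(2)] i \<open>Suc i < Suc n\<close> by (auto simp del: lessThan_iff; blast)+
      ultimately show ?thesis using False assms(1) by (auto simp: doubleton_eq_iff)
    qed
  qed
  also have "length (filter (\<lambda>i. i = n) [0..<Suc n]) = 1"
  proof -
    have "filter (\<lambda>i. i = n) [0..<n] = []" by (simp add: filter_empty_conv)
    then show ?thesis by simp
  qed
  finally show ?thesis .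
qed

lemma ctr_cycm:
  assumes "n \<ge> 2" "inj_on vs {..<Suc n}"
  shows "ctr (\<lambda>y. if y = vs n then vs 0 else y) (cycm vs (Suc n)) = cycm vs n"
proof -
  let ?f = "\<lambda>y. if y = vs n then vs 0 else y"
  have v0: "vs n \<noteq> vs 0" using inj_onD[OF assms(2), of n 0] assms(1) by auto
  have vi: "vs i \<noteq> vs n" if "i < n" for i using inj_onD[OF assms(2), of i n] that by auto
  have inj': "inj_on vs {..<n}" using assms(2) by (rule inj_on_subset) auto
  have e1: "[0..<Suc n] = [0..<n] @ [n]" by simp
  have "ctr ?f (cycm vs (Suc n)) = mset (filter (\<lambda>p. card p = 2) (map ((`) ?f) (map (\<lambda>i. {vs i, vs (Suc i mod Suc n)}) [0..<n]) @ [?f ` {vs n, vs (Suc n mod Suc n)}]))"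
    by (simp only: cycm_def ctr_mset e1 map_append list.map)
  also have "?f ` {vs n, vs (Suc n mod Suc n)} = {vs 0}" by auto
  also have "filter (\<lambda>p. card p = 2) (map ((`) ?f) (map (\<lambda>i. {vs i, vs (Suc i mod Suc n)}) [0..<n]) @ [{vs 0}])
     = filter (\<lambda>p. card p = 2) (map ((`) ?f) (map (\<lambda>i. {vs i, vs (Suc i mod Suc n)}) [0..<n]))"
    by simp
  also have "map ((`) ?f) (map (\<lambda>i. {vs i, vs (Suc i mod Suc n)}) [0..<n]) = map (\<lambda>i. {vs i, vs (Suc i mod n)}) [0..<n]"
    unfolding map_map
  proof (rule map_cong[OF refl])
    fix i assume "i \<in> set [0..<n]"
    then have i: "i < n" by simp
    show "((`) ?f \<circ> (\<lambda>i. {vs i, vs (Suc i mod Suc n)})) i = {vs i, vs (Suc i mod n)}"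
    proof (cases "Suc i = n")
      case True then show ?thesis using i vi[OF i] by simp
    next
      case False
      then have "Suc i < n" using i by simp
      then show ?thesis using i vi[OF i] vi[OF \<open>Suc i < n\<close>] by simp
    qed
  qed
  also have "filter (\<lambda>p. card p = 2) (map (\<lambda>i. {vs i, vs (Suc i mod n)}) [0..<n]) = map (\<lambda>i. {vs i, vs (Suc i mod n)}) [0..<n]"
    using cyc_neq[OF assms(1) inj'] by (auto intro!: filter_True)
  finally show ?thesis unfolding cycm_def .
qed


lemma sum_mset_nonneg_int: "(\<forall>Z\<in>#W. 0 \<le> (d Z::int)) \<Longrightarrow> 0 \<le> (\<Sum>Z\<in>#W. d Z)"
  by (induction W) auto

lemma lin_aux: fixes S T a b k k2 :: int
  assumes "S - T = 2 * k" "a - b = 2 * k2" shows "a + S - (b + T) = 2 * (k + k2)"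
  using assms by (simp add: algebra_simps)

lemma pres_aux: fixes S k :: int and T j :: nat
  assumes "S - int T = 2 * k" "T = 2 * j + 1" "0 \<le> S" shows "1 \<le> S"
proof -
  have t: "int T = 2 * int j + 1" using assms(2) by simp
  have s0: "S = 2 * k + int T" using assms(1) by (simp add: algebra_simps)
  have s: "S = 2 * k + 2 * int j + 1" using s0 t by simp
  have "\<not> (k + int j \<le> -1)" using s assms(3) by linarith
  then show ?thesis using s by linarith
qed

lemma odd_sum_pos:
  fixes d :: "'a \<Rightarrow> int" and c :: "'a \<Rightarrow> nat"
  assumes "\<forall>Z\<in>#W. 0 \<le> d Z \<and> even (d Z - int (c Z))" "odd (\<Sum>Z\<in>#W. c Z)"
  shows "1 \<le> (\<Sum>Z\<in>#W. d Z)"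
proof -
  have "\<exists>k. (\<Sum>Z\<in>#W. d Z) - int (\<Sum>Z\<in>#W. c Z) = 2 * k" using assms(1)
  proof (induction W)
    case empty then show ?case by (intro exI[of _ 0]) simp
  next
    case (add Z W)
    have pW: "\<forall>Z\<in>#W. 0 \<le> d Z \<and> even (d Z - int (c Z))" using add.prems by simp
    obtain k where k: "(\<Sum>Z\<in>#W. d Z) - int (\<Sum>Z\<in>#W. c Z) = 2 * k" using add.IH[OF pW] by (elim exE)
    have "even (d Z - int (c Z))" using add.prems by simp
    then obtain k2 where k2: "d Z - int (c Z) = 2 * k2" by (elim evenE)
    have e1: "(\<Sum>Z\<in>#add_mset Z W. d Z) = d Z + (\<Sum>Z\<in>#W. d Z)" by simp
    have e2: "int (\<Sum>Z\<in>#add_mset Z W. c Z) = int (c Z) + int (\<Sum>Z\<in>#W. c Z)"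
    proof -
      have "(\<Sum>Z\<in>#add_mset Z W. c Z) = c Z + (\<Sum>Z\<in>#W. c Z)" by simp
      then show ?thesis by (simp only: of_nat_add)
    qed
    have "d Z + (\<Sum>Z\<in>#W. d Z) - (int (c Z) + int (\<Sum>Z\<in>#W. c Z)) = 2 * (k + k2)"
      by (rule lin_aux[OF k k2])
    then show ?case unfolding e1 e2 by (rule exI)
  qed
  then obtain k where k: "(\<Sum>Z\<in>#W. d Z) - int (\<Sum>Z\<in>#W. c Z) = 2 * k" by blast
  obtain j where j: "(\<Sum>Z\<in>#W. c Z) = 2 * j + 1" using assms(2) by (elim oddE)
  have "0 \<le> (\<Sum>Z\<in>#W. d Z)" using assms(1) by (intro sum_mset_nonneg_int) blast
  show ?thesis by (rule pres_aux[OF k j]) fact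
qed


lemma per_Z:
  fixes v a :: 'v assumes "v \<noteq> a" "good Z"
  shows "0 \<le> cost Z - cost (ctr (\<lambda>y. if y = v then a else y) Z) \<and>
    even (cost Z - cost (ctr (\<lambda>y. if y = v then a else y) Z) - int (count Z {v,a}))"
proof -
  let ?Z' = "ctr (\<lambda>y. if y = v then a else y) Z"
  have c: "\<forall>p\<in>#Z. card p = 2" using assms(2) unfolding good_def by blast
  have sz: "size ?Z' + count Z {v,a} = size Z" using size_ctr[OF assms(1) c] .
  show ?thesis
  proof (cases "?Z' = {#}")
    case True
    show ?thesis
    proof (cases "Z = {#}")
      case True then show ?thesis by (simp add: cost_def)
    next
      case False
      have "size Z \<ge> 2" using good_size[OF assms(2) False] .
      then show ?thesis using sz \<open>?Z' = {#}\<close> False by (simp add: cost_def)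
    qed
  next
    case False
    then have "Z \<noteq> {#}" by auto
    have "int (size Z) = int (size ?Z') + int (count Z {v,a})" using sz by (metis of_nat_add)
    then have "cost Z - cost ?Z' = int (count Z {v,a})"
      unfolding cost_def using False \<open>Z \<noteq> {#}\<close> by simp
    then show ?thesis by simp
  qed
qed

lemma sum_mset_diff_int: "(\<Sum>Z\<in>#W. (f Z::int) - g Z) = (\<Sum>Z\<in>#W. f Z) - (\<Sum>Z\<in>#W. g Z)"
  by (induction W) auto

lemma key:
  "m \<ge> 2 \<Longrightarrow> inj_on vs {..<m} \<Longrightarrow> (\<forall>Z\<in>#W. good Z) \<Longrightarrow>
   (\<forall>q. even (count (cycm vs m) q + (\<Sum>Z\<in>#W. count Z q))) \<Longrightarrow> int m - 2 \<le> (\<Sum>Z\<in>#W. cost Z)"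
proof (induction m arbitrary: vs W)
  case 0 then show ?case by simp
next
  case (Suc n)
  show ?case
  proof (cases "n < 2")
    case True
    then have "Suc n = 2" using Suc.prems by simp
    moreover have "0 \<le> (\<Sum>Z\<in>#W. cost Z)" using Suc.prems(3) by (intro sum_mset_nonneg_int) (simp add: cost_nonneg)
    ultimately show ?thesis by simp
  next
    case False
    then have n2: "n \<ge> 2" by simp
    define v where "v = vs n"
    define a where "a = vs 0"
    define f where "f = (\<lambda>y. if y = v then a else y)"
    have va: "v \<noteq> a" using inj_onD[OF Suc.prems(2), of n 0] n2 unfolding v_def a_def by auto
    define W' where "W' = image_mset (ctr f) W"
    have inj': "inj_on vs {..<n}" using Suc.prems(2) by (rule inj_on_subset) auto
    have goodW': "\<forall>Z\<in>#W'. good Z" using Suc.prems(3) good_ctr[OF va] unfolding W'_def f_def by auto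
    have C': "ctr f (cycm vs (Suc n)) = cycm vs n"
      using ctr_cycm[OF n2 Suc.prems(2)] unfolding f_def v_def a_def .
    define U where "U = set_mset (cycm vs (Suc n)) \<union> \<Union> (set_mset ` set_mset W)"
    have finU: "finite U" unfolding U_def by simp
    have CU: "set_mset (cycm vs (Suc n)) \<subseteq> U" unfolding U_def by auto
    have WU: "\<forall>Z\<in>#W. set_mset Z \<subseteq> U" unfolding U_def by auto
    have par': "\<forall>q. even (count (cycm vs n) q + (\<Sum>Z\<in>#W'. count Z q))"
    proof
      fix q
      have e: "count (cycm vs n) q + (\<Sum>Z\<in>#W'. count Z q) =
        count (ctr f (cycm vs (Suc n))) q + (\<Sum>Z\<in>#W. count (ctr f Z) q)"
        unfolding C' W'_def by (simp add: multiset.map_comp o_def)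
      show "even (count (cycm vs n) q + (\<Sum>Z\<in>#W'. count Z q))"
      proof (cases "card q = 2")
        case False
        have h1: "count (ctr f (cycm vs (Suc n))) q = 0" unfolding count_ctr[OF finU CU, of f q] using False by simp
        have h2: "(\<Sum>Z\<in>#W. count (ctr f Z) q) = 0" unfolding sum_count_ctr[OF finU WU, of f q] using False by simp
        show ?thesis unfolding e h1 h2 by simp
      next
        case True
        let ?A = "{p\<in>U. f ` p = q}"
        have "count (ctr f (cycm vs (Suc n))) q + (\<Sum>Z\<in>#W. count (ctr f Z) q) =
           (\<Sum>p\<in>?A. count (cycm vs (Suc n)) p) + (\<Sum>p\<in>?A. (\<Sum>Z\<in>#W. count Z p))"
          using count_ctr[OF finU CU, of f q] sum_count_ctr[OF finU WU, of f q] True by simp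
        also have "\<dots> = (\<Sum>p\<in>?A. count (cycm vs (Suc n)) p + (\<Sum>Z\<in>#W. count Z p))"
          by (simp add: sum.distrib)
        finally have e2: "count (ctr f (cycm vs (Suc n))) q + (\<Sum>Z\<in>#W. count (ctr f Z) q) =
           (\<Sum>p\<in>?A. count (cycm vs (Suc n)) p + (\<Sum>Z\<in>#W. count Z p))" .
        have "even (\<Sum>p\<in>?A. count (cycm vs (Suc n)) p + (\<Sum>Z\<in>#W. count Z p))"
          using Suc.prems(4) by (intro dvd_sum) auto
        then show ?thesis unfolding e e2 .
      qed
    qed
    have IH: "int n - 2 \<le> (\<Sum>Z\<in>#W'. cost Z)" using Suc.IH[OF n2 inj' goodW' par'] .
    have odd: "odd (\<Sum>Z\<in>#W. count Z {v,a})"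
    proof -
      have "even (count (cycm vs (Suc n)) {v,a} + (\<Sum>Z\<in>#W. count Z {v,a}))" using Suc.prems(4) by blast
      moreover have "count (cycm vs (Suc n)) {v,a} = 1" using count_cycm_va[OF n2 Suc.prems(2)] unfolding v_def a_def .
      ultimately show ?thesis by simp
    qed
    have "1 \<le> (\<Sum>Z\<in>#W. cost Z - cost (ctr f Z))"
      using odd_sum_pos[of W "\<lambda>Z. cost Z - cost (ctr f Z)" "\<lambda>Z. count Z {v,a}"] per_Z[OF va] Suc.prems(3) odd
      unfolding f_def by blast
    also have "(\<Sum>Z\<in>#W. cost Z - cost (ctr f Z)) = (\<Sum>Z\<in>#W. cost Z) - (\<Sum>Z\<in>#W'. cost Z)"
      unfolding W'_def sum_mset_diff_int by (simp add: multiset.map_comp o_def)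
    finally show ?thesis using IH by simp
  qed
qed


lemma count_image_mset_set:
  assumes "finite A" shows "count (image_mset f (mset_set A)) x = card {a\<in>A. f a = x}"
  using assms
proof (induction A rule: finite_induct)
  case empty then show ?case by simp
next
  case (insert a A)
  have e: "{b\<in>insert a A. f b = x} = (if f a = x then insert a {b\<in>A. f b = x} else {b\<in>A. f b = x})" by auto
  have "a \<notin> {b\<in>A. f b = x}" using insert by simp
  moreover have "finite {b\<in>A. f b = x}" using insert by simp
  ultimately show ?case using insert e by simp
qed

lemma cyc_PM:
  assumes "is_cycle_in E ends Z"
  shows "\<exists>m vs. m \<ge> 2 \<and> inj_on vs {..<m} \<and> image_mset ends (mset_set Z) = cycm vs m \<and> card Z = m"
proof -
  obtain m vs es where h: "m \<ge> 2" "inj_on (vs :: nat \<Rightarrow> _) {..<m}" "inj_on es {..<m}" "Z = es ` {..<m}"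
     "\<forall>i<m. ends (es i) = {vs i, vs ((i + 1) mod m)}"
    using assms unfolding is_cycle_in_def by blast
  have "mset_set Z = image_mset es (mset_set {..<m})" using image_mset_mset_set[OF h(3)] h(4) by simp
  then have "image_mset ends (mset_set Z) = image_mset (ends \<circ> es) (mset_set {..<m})"
    by (simp add: multiset.map_comp)
  also have "\<dots> = image_mset (\<lambda>i. {vs i, vs (Suc i mod m)}) (mset_set {..<m})"
    by (rule image_mset_cong) (use h(5) in auto)
  also have "\<dots> = cycm vs m" unfolding cycm_def mset_map mset_upt lessThan_atLeast0 by simp
  finally have "image_mset ends (mset_set Z) = cycm vs m" .
  moreover have "card Z = m" using h(3,4) by (simp add: card_image)
  ultimately show ?thesis using h(1,2) by blast
qed

theorem mainTheorem6:
  fixes V :: "'v set" and E :: "'e set" and ends :: "'e \<Rightarrow> 'v set"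
    and D :: "'e set set" and C :: "'e set"
  assumes "multigraph V E ends"
    and "\<forall>u v. u \<noteq> v \<longrightarrow> even (mult E ends u v)"
    and "cycle_decomposition E ends D"
    and "C \<in> D"
  shows "real (card D) \<le> real (card E) / 2 - real (card C) + 2"
proof -
  have finE: "finite E" and c2: "\<forall>e\<in>E. card (ends e) = 2" using assms(1) unfolding multigraph_def by auto
  have cyc: "\<forall>Z\<in>D. is_cycle_in E ends Z" and disj: "\<forall>C1\<in>D. \<forall>C2\<in>D. C1 \<noteq> C2 \<longrightarrow> C1 \<inter> C2 = {}"
    and un: "\<Union>D = E" using assms(3) unfolding cycle_decomposition_def by auto
  have finD: "finite D" using un finE by (metis finite_UnionD)
  have finZ: "\<And>Z. Z \<in> D \<Longrightarrow> finite Z" using un finE by (metis Union_upper finite_subset)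
  define PM where "PM = (\<lambda>Z::'e set. image_mset ends (mset_set Z))"
  obtain mC vsC where hC: "mC \<ge> 2" "inj_on vsC {..<mC}" "PM C = cycm vsC mC" "card C = mC"
    using cyc_PM[of E ends C] cyc assms(4) unfolding PM_def by blast
  define W where "W = image_mset PM (mset_set (D - {C}))"
  have goodW: "\<forall>Z\<in>#W. good Z"
  proof
    fix Z assume "Z \<in># W"
    then obtain Y where Y: "Y \<in> D" "Z = PM Y" unfolding W_def using finD by auto
    then obtain m vs where "m \<ge> 2" "inj_on vs {..<m}" "PM Y = cycm vs m"
      using cyc_PM[of E ends Y] cyc unfolding PM_def by blast
    then show "good Z" using Y good_cycm by simp
  qed
  have sumW: "\<And>h. (\<Sum>Z\<in>#W. h Z) = (\<Sum>Y\<in>D - {C}. h (PM Y))"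
    unfolding W_def by (simp add: sum_unfold_sum_mset multiset.map_comp o_def)
  have par: "\<forall>q. even (count (cycm vsC mC) q + (\<Sum>Z\<in>#W. count Z q))"
  proof
    fix q
    have cnt: "\<And>Y. Y \<in> D \<Longrightarrow> count (PM Y) q = card {e\<in>Y. ends e = q}"
      unfolding PM_def using finZ by (simp add: count_image_mset_set)
    have "count (cycm vsC mC) q + (\<Sum>Z\<in>#W. count Z q) = (\<Sum>Y\<in>D. count (PM Y) q)"
      unfolding sumW hC(3)[symmetric] using finD assms(4) by (simp add: sum.remove)
    also have "\<dots> = (\<Sum>Y\<in>D. card {e\<in>Y. ends e = q})" using cnt by simp
    also have "\<dots> = card (\<Union>Y\<in>D. {e\<in>Y. ends e = q})"
      by (rule card_UN_disjoint[symmetric]) (use finD finZ disj in auto)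
    also have "(\<Union>Y\<in>D. {e\<in>Y. ends e = q}) = {e\<in>E. ends e = q}" using un by auto
    finally have e: "count (cycm vsC mC) q + (\<Sum>Z\<in>#W. count Z q) = card {e\<in>E. ends e = q}" .
    show "even (count (cycm vsC mC) q + (\<Sum>Z\<in>#W. count Z q))"
    proof (cases "{e\<in>E. ends e = q} = {}")
      case True then show ?thesis unfolding e True by simp
    next
      case False
      then obtain e where "e \<in> E" "ends e = q" by auto
      then have "card q = 2" using c2 by auto
      then obtain u v where uv: "q = {u,v}" "u \<noteq> v" by (meson card_2_iff)
      then have "even (mult E ends u v)" using assms(2) by blast
      then show ?thesis using e uv unfolding mult_def by simp
    qed
  qed
  have K: "int mC - 2 \<le> (\<Sum>Z\<in>#W. cost Z)" using key[OF hC(1,2) goodW par] .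
  have costY: "\<And>Y. Y \<in> D \<Longrightarrow> cost (PM Y) = int (card Y) - 2"
  proof -
    fix Y assume Y: "Y \<in> D"
    then obtain m vs where "m \<ge> 2" "inj_on vs {..<m}" "PM Y = cycm vs m" "card Y = m"
      using cyc_PM[of E ends Y] cyc unfolding PM_def by blast
    then show "cost (PM Y) = int (card Y) - 2" unfolding cost_def using size_cycm[of vs m] by auto
  qed
  have "(\<Sum>Z\<in>#W. cost Z) = (\<Sum>Y\<in>D - {C}. int (card Y) - 2)" unfolding sumW using costY by simp
  also have "\<dots> = (\<Sum>Y\<in>D - {C}. int (card Y)) - 2 * int (card (D - {C}))"
    by (simp add: sum_subtractf)
  finally have S: "(\<Sum>Z\<in>#W. cost Z) = (\<Sum>Y\<in>D - {C}. int (card Y)) - 2 * int (card (D - {C}))" .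
  have cE: "card E = (\<Sum>Y\<in>D. card Y)"
    unfolding un[symmetric] by (rule card_Union_disjoint) (use finZ disj in \<open>auto simp: pairwise_def disjnt_def\<close>)
  have cE2: "(\<Sum>Y\<in>D. card Y) = card C + (\<Sum>Y\<in>D - {C}. card Y)" using finD assms(4) by (simp add: sum.remove)
  have "card D > 0" using finD assms(4) card_gt_0_iff by blast
  then have cD: "card D = card (D - {C}) + 1" using finD assms(4) by (simp add: card_Diff_singleton)
  have I: "int (\<Sum>Y\<in>D - {C}. card Y) = (\<Sum>Y\<in>D - {C}. int (card Y))" by simp
  have "int mC - 2 \<le> int (card E) - int (card C) - 2 * (int (card D) - 1)"
    using K S cE cE2 cD I by simp
  then have "2 * int (card D) \<le> int (card E) - 2 * int (card C) + 4" using hC(4) by simp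
  then have "2 * real (card D) \<le> real (card E) - 2 * real (card C) + 4" by linarith
  then show ?thesis by simp
qed

end
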